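(* There is an absolute constant $C>0$ (independent of $K$, $V_T$, $T$) such that for every $T\geq 1$, every $K\geq 2$, every $V_T\in[K^{-1},K^{-1}T]$, and every admissible policy $\pi\in\mathcal{P}$, when all rewards are Bernoulli, \[ \mathcal{R}^{\pi}(\mathcal{V},T)\;\geq\; C\,(K V_T)^{1/3}\,T^{2/3}. \]
   Context: Multi-armed bandit with arms $\mathcal{K}=\{1,\dots,K\}$ and decision epochs $t\in\{1,\dots,T\}$. Pulling arm $k$ at epoch $t$ yields a reward $X_t^k\in[0,1]$ with mean $\mu_t^k=\mathbb{E}[X_t^k]$; here $X_t^k$ is Bernoulli with parameter $\mu_t^k$, rewards independent across epochs. Write $\mu=(\mu_t^k)_{k\in\mathcal{K},t\le T}$ and $\mu_t^*=\max_{k}\mu_t^k$. For a variation budget $V_T>0$, the temporal uncertainty set is $\mathcal{V}=\{\mu\in[0,1]^{K\times T}:\ \sum_{t=1}^{T-1}\sup_{k\in\mathcal{K}}|\mu_t^k-\mu_{t+1}^k|\le V_T\}$. An admissible policy $\pi\in\mathcal{P}$: given a random variable $U$ on some probability space (independent of the rewards), measurable maps $\pi_1(U)\in\mathcal{K}$ and $\pi_t(X_{t-1}^\pi,\dots,X_1^\pi,U)\in\mathcal{K}$ for $t\ge2$, where $X_s^\pi$ is the reward observed at epoch $s$ from the pulled arm $\pi_s$ (non-anticipating, possibly randomized). The regret is $\mathcal{R}^{\pi}(\mathcal{V},T)=\sup_{\mu\in\mathcal{V}}\big\{\sum_{t=1}^T\mu_t^*-\mathbb{E}^\pi[\sum_{t=1}^T\mu_t^{\pi_t}]\big\}$,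 the expectation over rewards and the policy's randomization. *)

theory Defs
  imports "HOL-Probability.Probability"
begin

text \<open>Arms are 1..K, epochs are 1..T; mu t k is the mean reward of arm k at epoch t.
  Rewards are Bernoulli, so an observed reward is a bool (True = 1).
  A history is the list of observed rewards in chronological order
  (element s is the reward observed at epoch s+1).\<close>

definition in_variation_set :: "nat \<Rightarrow> nat \<Rightarrow> real \<Rightarrow> (nat \<Rightarrow> nat \<Rightarrow> real) \<Rightarrow> bool" where
  "in_variation_set K T V mu \<longleftrightarrow>
     (\<forall>t\<in>{1..T}. \<forall>k\<in>{1..K}. 0 \<le> mu t k \<and> mu t k \<le> 1) \<and>
     (\<Sum>t=1..T-1. Max ((\<lambda>k. \<bar>mu t k - mu (t+1) k\<bar>) ` {1..K})) \<le> V"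

definition best_mean :: "nat \<Rightarrow> (nat \<Rightarrow> nat \<Rightarrow> real) \<Rightarrow> nat \<Rightarrow> real" where
  "best_mean K mu t = Max ((\<lambda>k. mu t k) ` {1..K})"

definition hist_prob :: "(nat \<Rightarrow> nat \<Rightarrow> real) \<Rightarrow> (bool list \<Rightarrow> nat) \<Rightarrow> bool list \<Rightarrow> real" where
  "hist_prob mu p h =
     (\<Prod>s<length h. if h ! s then mu (s+1) (p (take s h)) else 1 - mu (s+1) (p (take s h)))"

definition det_exp_reward :: "(nat \<Rightarrow> nat \<Rightarrow> real) \<Rightarrow> (bool list \<Rightarrow> nat) \<Rightarrow> nat \<Rightarrow> real" where
  "det_exp_reward mu p T =
     (\<Sum>t<T. \<Sum>h\<in>{h::bool list. length h = t}. hist_prob mu p h * mu (t+1) (p h))"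

text \<open>Admissible randomized policy: U is a random variable with law M on the reals
  (independent of rewards); pol u h is the arm pulled after history h when U = u.\<close>
definition admissible :: "nat \<Rightarrow> real measure \<Rightarrow> (real \<Rightarrow> bool list \<Rightarrow> nat) \<Rightarrow> bool" where
  "admissible K M pol \<longleftrightarrow> prob_space M \<and> sets M = sets borel \<and>
     (\<forall>h. (\<lambda>u. pol u h) \<in> M \<rightarrow>\<^sub>M count_space UNIV) \<and>
     (\<forall>u h. pol u h \<in> {1..K})"

definition exp_reward :: "real measure \<Rightarrow> (real \<Rightarrow> bool list \<Rightarrow> nat) \<Rightarrow> (nat \<Rightarrow> nat \<Rightarrow> real) \<Rightarrow> nat \<Rightarrow> real" where
  "exp_reward M pol mu T = (\<integral>u. det_exp_reward mu (pol u) T \<partial>M)"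

definition regret :: "nat \<Rightarrow> nat \<Rightarrow> real \<Rightarrow> real measure \<Rightarrow> (real \<Rightarrow> bool list \<Rightarrow> nat) \<Rightarrow> real" where
  "regret K T V M pol =
     (SUP mu\<in>{mu. in_variation_set K T V mu}.
        (\<Sum>t=1..T. best_mean K mu t) - exp_reward M pol mu T)"

end

theory Submission
  imports Defs "HOL-Library.FuncSet"
begin

lemma finite_len: "finite {h::bool list. length h = t}"
  using finite_lists_length_eq[of "UNIV::bool set" t] by simp

lemma lists_Suc_eq: "{h::bool list. length h = Suc t} = (\<lambda>(h,b). h@[b]) ` ({h. length h = t} \<times> UNIV)"
proof (rule set_eqI, rule iffI)
  fix x :: "bool list" assume "x \<in> {h. length h = Suc t}"
  then have "x = butlast x @ [last x]" "length (butlast x) = t"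
    by (auto simp: snoc_eq_iff_butlast) (metis append_butlast_last_id list.size(3) nat.distinct(1))
  then show "x \<in> (\<lambda>(h,b). h@[b]) ` ({h. length h = t} \<times> UNIV)"
    by (intro image_eqI[of _ _ "(butlast x, last x)"]) auto
qed auto

lemma lists_Suc_sum:
  "(\<Sum>h\<in>{h::bool list. length h = Suc t}. f h) = (\<Sum>h\<in>{h. length h = t}. f (h@[True]) + f (h@[False]))"
proof -
  have inj: "inj_on (\<lambda>(h,b). h@[b]) ({h::bool list. length h = t} \<times> UNIV)"
    by (auto simp: inj_on_def)
  have "(\<Sum>h\<in>{h::bool list. length h = Suc t}. f h) = (\<Sum>x\<in>{h::bool list. length h = t} \<times> UNIV. f ((\<lambda>(h,b). h@[b]) x))"
    unfolding lists_Suc_eq by (subst sum.reindex[OF inj]) simp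
  also have "\<dots> = (\<Sum>h\<in>{h::bool list. length h = t}. \<Sum>b\<in>UNIV. f (h@[b]))"
    by (subst sum.cartesian_product) (simp add: case_prod_unfold)
  also have "\<dots> = (\<Sum>h\<in>{h. length h = t}. f (h@[True]) + f (h@[False]))"
    by (simp add: UNIV_bool add.commute)
  finally show ?thesis .
qed

lemma hist_prob_snoc:
  "hist_prob mu p (h@[b]) = hist_prob mu p h * (if b then mu (length h + 1) (p h) else 1 - mu (length h + 1) (p h))"
proof -
  have "hist_prob mu p (h@[b]) = (\<Prod>s<Suc (length h). if (h@[b]) ! s then mu (s+1) (p (take s (h@[b]))) else 1 - mu (s+1) (p (take s (h@[b]))))"
    by (simp add: hist_prob_def)
  also have "\<dots> = (\<Prod>s<length h. if (h@[b]) ! s then mu (s+1) (p (take s (h@[b]))) else 1 - mu (s+1) (p (take s (h@[b])))) *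
      (if b then mu (length h + 1) (p h) else 1 - mu (length h + 1) (p h))"
    by (simp add: prod.lessThan_Suc)
  also have "(\<Prod>s<length h. if (h@[b]) ! s then mu (s+1) (p (take s (h@[b]))) else 1 - mu (s+1) (p (take s (h@[b])))) = hist_prob mu p h"
    unfolding hist_prob_def by (intro prod.cong) (auto simp: nth_append)
  finally show ?thesis .
qed

lemma hist_prob_Nil[simp]: "hist_prob mu p [] = 1"
  by (simp add: hist_prob_def)

lemma len0: "{h::bool list. length h = 0} = {[]}" by auto

lemma hist_sum1: "(\<Sum>h\<in>{h. length h = t}. hist_prob mu p h) = 1"
proof (induction t)
  case 0 then show ?case by (simp add: len0)
next
  case (Suc t)
  have "(\<Sum>h\<in>{h. length h = Suc t}. hist_prob mu p h) = (\<Sum>h\<in>{h. length h = t}. hist_prob mu p h)"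
    by (subst lists_Suc_sum) (simp add: hist_prob_snoc algebra_simps)
  then show ?case using Suc by simp
qed

definition strict :: "(nat \<Rightarrow> nat \<Rightarrow> real) \<Rightarrow> bool" where
  "strict mu \<longleftrightarrow> (\<forall>t k. 0 < mu t k \<and> mu t k < 1)"

lemma hist_pos: "strict mu \<Longrightarrow> 0 < hist_prob mu p h"
  unfolding hist_prob_def strict_def by (intro prod_pos) (auto simp: less_diff_eq)

definition KLd :: "(nat\<Rightarrow>nat\<Rightarrow>real) \<Rightarrow> (nat\<Rightarrow>nat\<Rightarrow>real) \<Rightarrow> (bool list \<Rightarrow> nat) \<Rightarrow> nat \<Rightarrow> real" where
 "KLd nu mu p t = (\<Sum>h\<in>{h. length h = t}. hist_prob nu p h * ln (hist_prob nu p h / hist_prob mu p h))"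

definition kl :: "real \<Rightarrow> real \<Rightarrow> real" where "kl x y = x * ln (x/y) + (1-x) * ln ((1-x)/(1-y))"

lemma kl_step:
  assumes "P > 0" "Q > 0" "0 < x" "x < 1" "0 < y" "y < 1"
  shows "P*x * ln (P*x / (Q*y)) + P*(1-x) * ln (P*(1-x) / (Q*(1-y))) = P * ln (P/Q) + P * kl x y"
proof -
  have "ln (P*x / (Q*y)) = ln ((P/Q) * (x/y))" by simp
  also have "\<dots> = ln (P/Q) + ln (x/y)" using assms by (intro ln_mult_pos) auto
  finally have 1: "ln (P*x / (Q*y)) = ln (P/Q) + ln (x/y)" .
  have "ln (P*(1-x) / (Q*(1-y))) = ln ((P/Q) * ((1-x)/(1-y)))" by simp
  also have "\<dots> = ln (P/Q) + ln ((1-x)/(1-y))" using assms by (intro ln_mult_pos) auto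
  finally have 2: "ln (P*(1-x) / (Q*(1-y))) = ln (P/Q) + ln ((1-x)/(1-y))" .
  note 1 2
  show ?thesis unfolding kl_def 1 2 by (simp add: algebra_simps)
qed

lemma KLd_Suc:
  assumes "strict nu" "strict mu"
  shows "KLd nu mu p (Suc t) = KLd nu mu p t + (\<Sum>h\<in>{h. length h = t}. hist_prob nu p h * kl (nu (t+1) (p h)) (mu (t+1) (p h)))"
proof -
  have "KLd nu mu p (Suc t) = (\<Sum>h\<in>{h. length h = t}. hist_prob nu p h * ln (hist_prob nu p h / hist_prob mu p h) + hist_prob nu p h * kl (nu (t+1) (p h)) (mu (t+1) (p h)))"
    unfolding KLd_def
  proof (subst lists_Suc_sum, intro sum.cong refl)
    fix x :: "bool list" assume "x \<in> {h. length h = t}"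
    then have lx: "length x = t" by simp
    show "hist_prob nu p (x @ [True]) * ln (hist_prob nu p (x @ [True]) / hist_prob mu p (x @ [True])) +
          hist_prob nu p (x @ [False]) * ln (hist_prob nu p (x @ [False]) / hist_prob mu p (x @ [False])) =
          hist_prob nu p x * ln (hist_prob nu p x / hist_prob mu p x) + hist_prob nu p x * kl (nu (t + 1) (p x)) (mu (t + 1) (p x))"
      unfolding hist_prob_snoc if_True if_False lx mult.assoc[symmetric]
      using assms unfolding strict_def
      by (intro kl_step) (simp_all add: hist_pos[OF assms(1)] hist_pos[OF assms(2)])
  qed
  then show ?thesis by (simp add: sum.distrib KLd_def)
qed

lemma KLd_formula:
  assumes "strict nu" "strict mu"
  shows "KLd nu mu p t = (\<Sum>s<t. \<Sum>h\<in>{h. length h = s}. hist_prob nu p h * kl (nu (s+1) (p h)) (mu (s+1) (p h)))"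
proof (induction t)
  case 0 then show ?case by (simp add: KLd_def len0)
next
  case (Suc t) then show ?case using KLd_Suc[OF assms] by simp
qed

lemma lin_aux: "X \<ge> 2*P - 2*Q \<Longrightarrow> 32*D \<le> 256*E + S \<Longrightarrow> S \<le> 2*P+2*R \<Longrightarrow> E = P + R - 2*Q \<Longrightarrow>
   16*D \<le> 128*X + 128*R - 128*P + P + (R::real)"
  by linarith

lemma pt_bound:
  fixes a b :: real assumes "a > 0" "b > 0"
  shows "16*\<bar>a^2 - b^2\<bar> \<le> 128*(a^2*ln (a^2/b^2)) + 128*b^2 - 128*a^2 + a^2 + b^2"
proof -
  have l1: "ln (b/a) \<le> b/a - 1" using assms by (intro ln_le_minus_one) simp
  have l2: "ln (a^2/b^2) = 2 * ln (a/b)" using assms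
    by (simp add: power_divide[symmetric] ln_realpow)
  have l3: "ln (a/b) = - ln (b/a)" using assms by (simp add: ln_div)
  have h1: "a^2 * ln (a^2/b^2) \<ge> 2*a^2 - 2*(a*b)"
  proof -
    have "a^2 * ln (a^2/b^2) = 2*a^2 * (- ln (b/a))" using l2 l3 by simp
    also have "\<dots> \<ge> 2*a^2 * (1 - b/a)" using l1 assms by (intro mult_left_mono) auto
    also have "2*a^2 * (1 - b/a) = 2*a^2 - 2*(a*b)" using assms by (simp add: power2_eq_square field_simps)
    finally show ?thesis by simp
  qed
  have e: "\<bar>a^2 - b^2\<bar> = \<bar>a-b\<bar> * (a+b)"
  proof -
    have "a^2 - b^2 = (a-b)*(a+b)" by (simp add: power2_eq_square algebra_simps)
    then show ?thesis using assms by (simp add: abs_mult)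
  qed
  have gen: "32*(xx*yy) \<le> 256*xx^2 + yy^2" for xx yy :: real
  proof -
    have "0 \<le> (16*xx - yy)^2" by simp
    also have "(16*xx - yy)^2 = 256*xx^2 - 32*(xx*yy) + yy^2" by (simp add: power2_eq_square algebra_simps)
    finally show ?thesis by simp
  qed
  have h2: "32*\<bar>a^2 - b^2\<bar> \<le> 256*(a-b)^2 + (a+b)^2"
    using gen[of "\<bar>a-b\<bar>" "a+b"] e by simp
  have h3: "(a+b)^2 \<le> 2*a^2+2*b^2"
  proof -
    have "(a+b)^2 = a^2 + b^2 + 2*(a*b)" "(a-b)^2 = a^2 + b^2 - 2*(a*b)" by (simp_all add: power2_sum power2_diff)
    moreover have "0 \<le> (a-b)^2" by simp
    ultimately show ?thesis by linarith
  qed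
  have h4: "(a-b)^2 = a^2 + b^2 - 2*(a*b)" by (simp add: power2_diff)
  show ?thesis by (rule lin_aux[OF h1 h2 h3 h4])
qed

lemma tv_bound:
  fixes p q :: "'a \<Rightarrow> real"
  assumes "finite S" "\<forall>h\<in>S. p h > 0" "\<forall>h\<in>S. q h > 0" "sum p S = 1" "sum q S = 1"
  shows "(\<Sum>h\<in>S. \<bar>p h - q h\<bar>) \<le> 8 * (\<Sum>h\<in>S. p h * ln (p h / q h)) + 1/8"
proof -
  have "16 * (\<Sum>h\<in>S. \<bar>p h - q h\<bar>) = (\<Sum>h\<in>S. 16*\<bar>p h - q h\<bar>)" by (simp add: sum_distrib_left)
  also have "\<dots> \<le> (\<Sum>h\<in>S. 128*(p h * ln (p h / q h)) + 128 * q h - 128 * p h + p h + q h)"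
  proof (rule sum_mono)
    fix h assume "h \<in> S"
    then have pp: "p h > 0" "q h > 0" using assms by auto
    show "16*\<bar>p h - q h\<bar> \<le> 128*(p h * ln (p h / q h)) + 128 * q h - 128 * p h + p h + q h"
      using pt_bound[of "sqrt (p h)" "sqrt (q h)"] pp by simp
  qed
  also have "\<dots> = 128 * (\<Sum>h\<in>S. p h * ln (p h / q h)) + 128 * sum q S - 128 * sum p S + sum p S + sum q S"
    by (simp only: sum.distrib sum_subtractf sum_distrib_left)
  also have "\<dots> = 128 * (\<Sum>h\<in>S. p h * ln (p h / q h)) + 2" using assms by simp
  finally show ?thesis by simp
qed

lemma kl_bound:
  fixes e :: real assumes "0 < e" "e \<le> 1/4"
  shows "kl (1/2) (1/2+e) \<le> 8*e^2"
proof -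
  have "kl (1/2) (1/2+e) = 1/2 * ln (1/(1+2*e)) + 1/2 * ln (1/(1-2*e))"
    unfolding kl_def by (simp add: field_simps)
  also have "\<dots> \<le> 1/2 * (1/(1+2*e) - 1) + 1/2 * (1/(1-2*e) - 1)"
    using assms by (intro add_mono mult_left_mono ln_le_minus_one) auto
  also have "\<dots> = 4*e^2/(1-4*e^2)"
    using assms by (simp add: field_simps power2_eq_square)
  also have "\<dots> \<le> 8*e^2"
  proof -
    have "e*e \<le> (1/4)*(1/4)" using assms by (intro mult_mono) auto
    then have "1 - 4*e^2 \<ge> 1/2" by (simp add: power2_eq_square)
    then have "8*e^2*(1/2) \<le> 8*e^2*(1-4*e^2)" by (intro mult_left_mono) auto
    then have "4*e^2 \<le> 8*e^2*(1-4*e^2)" by simp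
    moreover have "1 - 4*e^2 > 0" using \<open>1 - 4*e^2 \<ge> 1/2\<close> by simp
    ultimately show ?thesis by (simp add: pos_divide_le_eq)
  qed
  finally show ?thesis .
qed

definition inst :: "real \<Rightarrow> nat \<Rightarrow> (nat \<Rightarrow> nat) \<Rightarrow> nat \<Rightarrow> nat \<Rightarrow> real" where
 "inst e L a t k = (if k = a ((t - 1) div L) then 1/2 + e else 1/2)"

lemma inst_Suc: "inst e L a (Suc s) k = (if k = a (s div L) then 1/2+e else 1/2)"
  by (simp add: inst_def)

lemma inst_strict: "0 < e \<Longrightarrow> e < 1/2 \<Longrightarrow> strict (inst e L a)"
  by (auto simp: strict_def inst_def)

lemma kl_same[simp]: "kl x x = 0"
  by (cases "x = 0"; cases "x = 1") (auto simp: kl_def)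

definition Qb :: "real \<Rightarrow> nat \<Rightarrow> (nat \<Rightarrow> nat) \<Rightarrow> (bool list \<Rightarrow> nat) \<Rightarrow> nat \<Rightarrow> real" where
  "Qb e L a p t = (\<Sum>h\<in>{h. length h = t}. hist_prob (inst e L a) p h * (if p h = a (t div L) then 1 else 0))"

lemma card_block: assumes "L > 0" shows "card {s. s < t \<and> s div L = j} \<le> L"
proof -
  have "{s. s < t \<and> s div L = j} \<subseteq> {j*L..<j*L+L}"
  proof
    fix s assume "s \<in> {s. s < t \<and> s div L = j}"
    then have sj: "s div L = j" by simp
    have "s div L * L + s mod L = s" by (rule div_mult_mod_eq)
    then have eq: "j*L + s mod L = s" using sj by simp
    moreover have "s mod L < L" using assms by simp
    ultimately show "s \<in> {j*L..<j*L+L}" by simp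
  qed
  then have "card {s. s < t \<and> s div L = j} \<le> card {j*L..<j*L+L}" by (intro card_mono) auto
  then show ?thesis by simp
qed

lemma block_bound:
  fixes K :: nat
  assumes e: "0 < e" "e \<le> 1/4" and L: "L > 0" and K: "K \<ge> 2" and p: "\<forall>h. p h \<in> {1..K}"
    and c: "512*e^2*real L \<le> real K"
  shows "(\<Sum>k\<in>{1..K}. 1 - Qb e L (a(t div L := k)) p t) \<ge> real K / 4"
proof -
  define j where "j = t div L"
  define nu where "nu = inst e L (a(j:=0))"
  define mk where "mk k = inst e L (a(j:=k))" for k
  define S where "S = {h::bool list. length h = t}"
  have fS: "finite S" unfolding S_def by (rule finite_len)
  have snu: "strict nu" unfolding nu_def using e by (intro inst_strict) auto
  have smk: "strict (mk k)" for k unfolding mk_def using e by (intro inst_strict) auto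
  have Qk: "Qb e L (a(j := k)) p t \<le> (\<Sum>h\<in>S. hist_prob nu p h * (if p h = k then 1 else 0)) + 8 * KLd nu (mk k) p t + 1/8" for k
  proof -
    have "Qb e L (a(j := k)) p t = (\<Sum>h\<in>S. hist_prob (mk k) p h * (if p h = k then 1 else 0))"
      unfolding Qb_def mk_def S_def j_def by simp
    also have "\<dots> = (\<Sum>h\<in>S. hist_prob nu p h * (if p h = k then 1 else 0)) + (\<Sum>h\<in>S. (hist_prob (mk k) p h - hist_prob nu p h) * (if p h = k then 1 else 0))"
      by (simp add: sum.distrib[symmetric] algebra_simps)
    also have "(\<Sum>h\<in>S. (hist_prob (mk k) p h - hist_prob nu p h) * (if p h = k then 1 else 0)) \<le> (\<Sum>h\<in>S. \<bar>hist_prob nu p h - hist_prob (mk k) p h\<bar>)"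
      by (intro sum_mono) auto
    also have "\<dots> \<le> 8 * KLd nu (mk k) p t + 1/8"
      unfolding KLd_def S_def[symmetric]
      using tv_bound[OF fS, of "hist_prob nu p" "hist_prob (mk k) p"] hist_pos[OF snu] hist_pos[OF smk] hist_sum1
      unfolding S_def by auto
    finally show ?thesis by simp
  qed
  have sumnu: "(\<Sum>k\<in>{1..K}. \<Sum>h\<in>S. hist_prob nu p h * (if p h = k then 1 else 0)) = 1"
  proof -
    have "(\<Sum>k\<in>{1..K}. \<Sum>h\<in>S. hist_prob nu p h * (if p h = k then 1 else 0)) = (\<Sum>h\<in>S. \<Sum>k\<in>{1..K}. hist_prob nu p h * (if p h = k then 1 else 0))"
      by (rule sum.swap)
    also have "\<dots> = (\<Sum>h\<in>S. hist_prob nu p h)"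
    proof (intro sum.cong refl)
      fix h show "(\<Sum>k\<in>{1..K}. hist_prob nu p h * (if p h = k then 1 else 0)) = hist_prob nu p h"
        using p by (simp add: if_distrib[of "\<lambda>x. hist_prob nu p h * x"] sum.delta cong: if_cong)
    qed
    also have "\<dots> = 1" unfolding S_def by (rule hist_sum1)
    finally show ?thesis .
  qed
  have klsum: "(\<Sum>k\<in>{1..K}. KLd nu (mk k) p t) \<le> 8*e^2*real L"
  proof -
    have inner: "(\<Sum>k\<in>{1..K}. kl (nu (s+1) (p h)) (mk k (s+1) (p h))) \<le> (if s div L = j then 8*e^2 else 0)" for s h
    proof (cases "s div L = j")
      case True
      have "p h \<noteq> 0" using p by (metis atLeastAtMost_iff not_one_le_zero)
      then have n12: "nu (s+1) (p h) = 1/2" unfolding nu_def using True by (simp add: inst_Suc)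
      have mke: "mk k (s+1) (p h) = (if p h = k then 1/2 + e else 1/2)" for k
        unfolding mk_def using True by (simp add: inst_Suc)
      have "(\<Sum>k\<in>{1..K}. kl (nu (s+1) (p h)) (mk k (s+1) (p h))) = (\<Sum>k\<in>{1..K}. if p h = k then kl (1/2) (1/2+e) else 0)"
        unfolding n12 mke by (intro sum.cong refl) simp
      also have "\<dots> = kl (1/2) (1/2+e)" using p by (simp add: sum.delta)
      also have "\<dots> \<le> 8*e^2" using kl_bound e by simp
      finally show ?thesis using True by simp
    next
      case False
      have "nu (s+1) (p h) = mk k (s+1) (p h)" for k unfolding nu_def mk_def using False by (simp add: inst_Suc)
      then show ?thesis using False by simp
    qed
    have "(\<Sum>k\<in>{1..K}. KLd nu (mk k) p t) = (\<Sum>k\<in>{1..K}. \<Sum>s<t. \<Sum>h\<in>{h. length h = s}. hist_prob nu p h * kl (nu (s+1) (p h)) (mk k (s+1) (p h)))"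
      using KLd_formula[OF snu smk] by simp
    also have "\<dots> = (\<Sum>s<t. \<Sum>h\<in>{h. length h = s}. hist_prob nu p h * (\<Sum>k\<in>{1..K}. kl (nu (s+1) (p h)) (mk k (s+1) (p h))))"
      by (subst sum.swap) (intro sum.cong refl, subst sum.swap, simp add: sum_distrib_left)
    also have "\<dots> \<le> (\<Sum>s<t. \<Sum>h\<in>{h. length h = s}. hist_prob nu p h * (if s div L = j then 8*e^2 else 0))"
      using hist_pos[OF snu] inner by (intro sum_mono mult_left_mono) (auto intro: less_imp_le)
    also have "\<dots> = (\<Sum>s<t. (if s div L = j then 8*e^2 else 0))"
      by (simp add: sum_distrib_right[symmetric] hist_sum1)
    also have "\<dots> = 8*e^2 * real (card {s. s < t \<and> s div L = j})"
      by (simp add: sum.If_cases lessThan_def Collect_conj_eq[symmetric])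
    also have "\<dots> \<le> 8*e^2 * real L" using card_block[OF L] by (intro mult_left_mono) auto
    finally show ?thesis .
  qed
  have "(\<Sum>k\<in>{1..K}. Qb e L (a(j := k)) p t) \<le> (\<Sum>k\<in>{1..K}. (\<Sum>h\<in>S. hist_prob nu p h * (if p h = k then 1 else 0)) + 8 * KLd nu (mk k) p t + 1/8)"
    by (intro sum_mono Qk)
  also have "\<dots> = 1 + 8 * (\<Sum>k\<in>{1..K}. KLd nu (mk k) p t) + real K / 8"
    unfolding sum.distrib sumnu sum_distrib_left[symmetric] by simp
  also have "\<dots> \<le> 1 + 8 * (8*e^2*real L) + real K / 8" using klsum by linarith
  also have "\<dots> \<le> 1 + real K / 4" using c by simp
  finally have "(\<Sum>k\<in>{1..K}. Qb e L (a(j := k)) p t) \<le> 1 + real K / 4" .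
  then have "(\<Sum>k\<in>{1..K}. 1 - Qb e L (a(j := k)) p t) \<ge> real K - 1 - real K / 4"
    by (simp add: sum_subtractf)
  moreover have "real K - 1 - real K / 4 \<ge> real K / 4" using K by simp
  ultimately show ?thesis unfolding j_def by linarith
qed

lemma best_inst:
  assumes "b (t div L) \<in> {1..K}" "0 \<le> e"
  shows "best_mean K (inst e L b) (Suc t) = 1/2 + e"
  unfolding best_mean_def
proof (rule Max_eqI)
  show "finite ((\<lambda>k. inst e L b (Suc t) k) ` {1..K})" by simp
  show "\<And>y. y \<in> (\<lambda>k. inst e L b (Suc t) k) ` {1..K} \<Longrightarrow> y \<le> 1/2 + e"
    using assms by (auto simp: inst_Suc)
  show "1/2 + e \<in> (\<lambda>k. inst e L b (Suc t) k) ` {1..K}"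
    using assms by (intro image_eqI[of _ _ "b (t div L)"]) (auto simp: inst_Suc)
qed

lemma det_regret:
  assumes "\<forall>t<T. b (t div L) \<in> {1..K}" "0 \<le> e"
  shows "(\<Sum>t=1..T. best_mean K (inst e L b) t) - det_exp_reward (inst e L b) p T = e * (\<Sum>t<T. 1 - Qb e L b p t)"
proof -
  have "(\<Sum>t=1..T. best_mean K (inst e L b) t) = (\<Sum>t<T. best_mean K (inst e L b) (Suc t))"
    using sum.atLeast1_atMost_eq[of "best_mean K (inst e L b)" T] by simp
  also have "\<dots> = (\<Sum>t<T. 1/2 + e)" using assms best_inst by (intro sum.cong) auto
  finally have 1: "(\<Sum>t=1..T. best_mean K (inst e L b) t) = (\<Sum>t<T. 1/2 + e)" .
  have 2: "(\<Sum>h\<in>{h. length h = t}. hist_prob (inst e L b) p h * inst e L b (t+1) (p h)) = 1/2 + e * Qb e L b p t" for t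
  proof -
    have "(\<Sum>h\<in>{h. length h = t}. hist_prob (inst e L b) p h * inst e L b (t+1) (p h)) =
       (\<Sum>h\<in>{h. length h = t}. 1/2 * hist_prob (inst e L b) p h + e * (hist_prob (inst e L b) p h * (if p h = b (t div L) then 1 else 0)))"
      by (intro sum.cong refl) (simp add: inst_Suc algebra_simps)
    also have "\<dots> = 1/2 * (\<Sum>h\<in>{h. length h = t}. hist_prob (inst e L b) p h) + e * Qb e L b p t"
      unfolding Qb_def by (simp add: sum.distrib sum_distrib_left)
    finally show ?thesis by (simp add: hist_sum1)
  qed
  have 3: "(\<Sum>t<T. 1/2 + e * Qb e L b p t) = real T / 2 + e * (\<Sum>t<T. Qb e L b p t)"
    by (simp add: sum.distrib sum_distrib_left)
  show ?thesis unfolding 1 det_exp_reward_def 2 3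
    by (simp add: sum_subtractf algebra_simps)
qed

lemma avg_bound:
  fixes K :: nat
  assumes e: "0 < e" "e \<le> 1/4" and L: "L > 0" and K: "K \<ge> 2" and p: "\<forall>h. p h \<in> {1..K}"
    and c: "512*e^2*real L \<le> real K" and j: "t div L < m"
  shows "(\<Sum>a\<in>PiE {..<m} (\<lambda>_. {1..K}). 1 - Qb e L a p t) \<ge> real (card (PiE {..<m} (\<lambda>_. {1..K}))) / 4"
proof -
  define j where "j = t div L"
  define R where "R = {..<m} - {j}"
  define F where "F = (\<lambda>_::nat. {1..K})"
  have ins: "{..<m} = insert j R" unfolding R_def j_def using j by auto
  have jR: "j \<notin> R" unfolding R_def by simp
  have inj: "inj_on (\<lambda>(y, g). g(j := y)) (F j \<times> PiE R F)"
  proof (rule inj_onI, clarify)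
    fix y g y' g' assume *: "y \<in> F j" "g \<in> PiE R F" "y' \<in> F j" "g' \<in> PiE R F" "g(j := y) = g'(j := y')"
    then have "y = y'" by (metis fun_upd_same)
    moreover have "g = g'"
    proof
      fix x show "g x = g' x"
      proof (cases "x = j")
        case True then show ?thesis using * jR by (auto simp: PiE_def extensional_def)
      next
        case False then show ?thesis using *(5) by (metis fun_upd_other)
      qed
    qed
    ultimately show "y = y' \<and> g = g'" by simp
  qed
  have A: "PiE {..<m} F = (\<lambda>(y, g). g(j := y)) ` (F j \<times> PiE R F)"
    unfolding ins by (rule PiE_insert_eq)
  have fin: "finite (PiE R F)" unfolding F_def R_def by (intro finite_PiE) auto
  have "(\<Sum>a\<in>PiE {..<m} F. 1 - Qb e L a p t) = (\<Sum>x\<in>F j \<times> PiE R F. 1 - Qb e L ((\<lambda>(y, g). g(j := y)) x) p t)"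
    unfolding A by (subst sum.reindex[OF inj]) simp
  also have "\<dots> = (\<Sum>g\<in>PiE R F. \<Sum>y\<in>F j. 1 - Qb e L (g(j := y)) p t)"
  proof -
    have "(\<Sum>y\<in>F j. \<Sum>g\<in>PiE R F. 1 - Qb e L (g(j := y)) p t) = (\<Sum>x\<in>F j \<times> PiE R F. 1 - Qb e L ((\<lambda>(y, g). g(j := y)) x) p t)"
      by (simp add: sum.cartesian_product case_prod_unfold)
    then show ?thesis by (simp add: sum.swap[of _ "F j"])
  qed
  also have "\<dots> \<ge> (\<Sum>g\<in>PiE R F. real K / 4)"
    unfolding F_def j_def using block_bound[OF e L K p c] by (intro sum_mono) auto
  finally have "(\<Sum>a\<in>PiE {..<m} F. 1 - Qb e L a p t) \<ge> real (card (PiE R F)) * real K / 4" by simp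
  moreover have "card (PiE {..<m} F) = K * card (PiE R F)"
    unfolding A using card_image[OF inj] by (simp add: card_cartesian_product F_def)
  ultimately show ?thesis unfolding F_def by (simp add: mult.commute)
qed

lemma div_same: assumes "L > 0" "\<not> L dvd Suc s" shows "Suc s div L = s div L"
  using assms by (simp add: div_Suc dvd_eq_mod_eq_0)

lemma card_dvd: assumes "L > 0" shows "card {t\<in>{1..n}. L dvd t} \<le> n div L"
proof -
  have "{t\<in>{1..n}. L dvd t} \<subseteq> (\<lambda>i. i*L) ` {1..n div L}"
  proof
    fix t assume "t \<in> {t\<in>{1..n}. L dvd t}"
    then obtain c where c: "t = c*L" "1 \<le> t" "t \<le> n" by (auto elim!: dvdE simp: mult.commute)
    then have "c \<ge> 1" by (cases c) auto
    moreover have "c \<le> n div L" using c assms by (metis div_le_mono nonzero_mult_div_cancel_right not_gr0)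
    ultimately show "t \<in> (\<lambda>i. i*L) ` {1..n div L}" using c by auto
  qed
  then have "card {t\<in>{1..n}. L dvd t} \<le> card ((\<lambda>i. i*L) ` {1..n div L})" by (intro card_mono) auto
  also have "\<dots> \<le> card {1..n div L}" by (rule card_image_le) simp
  finally show ?thesis by simp
qed

lemma div_real_le: "real (n div L) \<le> real n / real L"
proof (cases "L = 0")
  case False
  have "(n div L) * L \<le> n" by (rule div_times_less_eq_dividend)
  then have "real (n div L) * real L \<le> real n" by (metis of_nat_le_iff of_nat_mult)
  then show ?thesis using False by (simp add: pos_le_divide_eq)
qed simp

lemma inst_var:
  assumes "0 \<le> e" "e \<le> 1/2" "L > 0" "e * real T / real L \<le> V" "K > 0"
  shows "in_variation_set K T V (inst e L a)"
  unfolding in_variation_set_def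
proof
  show "\<forall>t\<in>{1..T}. \<forall>k\<in>{1..K}. 0 \<le> inst e L a t k \<and> inst e L a t k \<le> 1"
    using assms by (auto simp: inst_def)
  have trm: "Max ((\<lambda>k. \<bar>inst e L a t k - inst e L a (t+1) k\<bar>) ` {1..K}) \<le> (if L dvd t then e else 0)"
    if tT: "t \<in> {1..T-1}" for t
  proof (cases "K = 0")
    case True then show ?thesis using assms by simp
  next
    case False
    then have ne: "(\<lambda>k. \<bar>inst e L a t k - inst e L a (t+1) k\<bar>) ` {1..K} \<noteq> {}" by auto
    obtain s where s: "t = Suc s" using tT by (cases t) auto
    show ?thesis
    proof (cases "L dvd t")
      case True
      then show ?thesis using assms ne by (subst Max_le_iff) (auto simp: inst_def)
    next
      case False
      then have "t div L = (t - 1) div L" using div_same[OF assms(3)] s by simp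
      then show ?thesis using ne False by (subst Max_le_iff) (auto simp: inst_def)
    qed
  qed
  have "(\<Sum>t=1..T-1. Max ((\<lambda>k. \<bar>inst e L a t k - inst e L a (t+1) k\<bar>) ` {1..K})) \<le> (\<Sum>t=1..T-1. (if L dvd t then e else 0))"
    using trm by (intro sum_mono) auto
  also have "\<dots> = e * real (card {t\<in>{1..T-1}. L dvd t})"
  proof -
    have "{t\<in>{1..T-1}. L dvd t} = {1..T-1} \<inter> {t. L dvd t}" by auto
    then show ?thesis by (simp add: sum.If_cases)
  qed
  also have "\<dots> \<le> e * real ((T-1) div L)" using card_dvd[OF assms(3)] assms by (intro mult_left_mono) auto
  also have "\<dots> \<le> e * (real T / real L)"
  proof -
    have "real ((T-1) div L) \<le> real (T-1) / real L" by (rule div_real_le)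
    also have "\<dots> \<le> real T / real L" using assms by (intro divide_right_mono) auto
    finally show ?thesis using assms by (intro mult_left_mono) auto
  qed
  finally show "(\<Sum>t=1..T-1. Max ((\<lambda>k. \<bar>inst e L a t k - inst e L a (t+1) k\<bar>) ` {1..K})) \<le> V"
    using assms by simp
qed

lemma hist_nonneg:
  assumes "\<forall>s<t. \<forall>k\<in>{1..K}. 0 \<le> mu (s+1) k \<and> mu (s+1) k \<le> 1" "\<forall>h. p h \<in> {1..K}" "length h \<le> t"
  shows "0 \<le> hist_prob mu p h"
  unfolding hist_prob_def using assms by (intro prod_nonneg) auto

lemma det_nonneg:
  assumes "in_variation_set K T V mu" "\<forall>h. p h \<in> {1..K}"
  shows "0 \<le> det_exp_reward mu p T"
  unfolding det_exp_reward_def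
proof (intro sum_nonneg mult_nonneg_nonneg)
  fix t h assume t: "t \<in> {..<T}" and h: "h \<in> {h::bool list. length h = t}"
  have r: "\<forall>s<t. \<forall>k\<in>{1..K}. 0 \<le> mu (s+1) k \<and> mu (s+1) k \<le> 1"
    using assms(1) t unfolding in_variation_set_def by auto
  show "0 \<le> hist_prob mu p h" using hist_nonneg[OF r assms(2)] h by simp
  show "0 \<le> mu (t+1) (p h)" using assms t unfolding in_variation_set_def by auto
qed

lemma best_le:
  assumes "in_variation_set K T V mu" "K > 0"
  shows "(\<Sum>t=1..T. best_mean K mu t) \<le> real T"
proof -
  have "(\<Sum>t=1..T. best_mean K mu t) \<le> (\<Sum>t=1..T. 1)"
  proof (intro sum_mono)
    fix t assume "t \<in> {1..T}"
    then show "best_mean K mu t \<le> 1" using assms unfolding best_mean_def in_variation_set_def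
      by (subst Max_le_iff) auto
  qed
  then show ?thesis by simp
qed

lemma rand_bound:
  fixes K T :: nat and V :: real
  assumes adm: "admissible K M pol" and K: "K > 0"
    and fA: "finite A" and neA: "A \<noteq> {}"
    and var: "\<forall>a\<in>A. in_variation_set K T V (mus a)"
    and bnd: "\<And>p. \<forall>h. p h \<in> {1..K} \<Longrightarrow>
       (\<Sum>a\<in>A. (\<Sum>t=1..T. best_mean K (mus a) t) - det_exp_reward (mus a) p T) \<ge> real (card A) * c"
    and big: "\<forall>a\<in>A. (\<Sum>t=1..T. best_mean K (mus a) t) \<ge> c"
  shows "regret K T V M pol \<ge> c"
proof -
  interpret P: prob_space M using adm unfolding admissible_def by simp
  have polr: "\<forall>h. pol u h \<in> {1..K}" for u using adm unfolding admissible_def by simp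
  define f where "f mu = (\<Sum>t=1..T. best_mean K mu t) - exp_reward M pol mu T" for mu
  define G where "G = {mu. in_variation_set K T V mu}"
  have bdd: "bdd_above (f ` G)"
  proof (rule bdd_aboveI2)
    fix mu assume "mu \<in> G"
    then have iv: "in_variation_set K T V mu" unfolding G_def by simp
    have "0 \<le> exp_reward M pol mu T" unfolding exp_reward_def
      using det_nonneg[OF iv polr] by (intro integral_nonneg_AE) auto
    then show "f mu \<le> real T" unfolding f_def using best_le[OF iv K] by simp
  qed
  have reg: "regret K T V M pol = (SUP mu\<in>G. f mu)" unfolding regret_def f_def G_def by simp
  have le: "f (mus a) \<le> regret K T V M pol" if "a \<in> A" for a
    unfolding reg using var that bdd by (intro cSUP_upper) (auto simp: G_def)
  show ?thesis
  proof (cases "\<forall>a\<in>A. integrable M (\<lambda>u. det_exp_reward (mus a) (pol u) T)")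
    case False
    then obtain a where a: "a \<in> A" "\<not> integrable M (\<lambda>u. det_exp_reward (mus a) (pol u) T)" by blast
    then have fe: "f (mus a) = (\<Sum>t=1..T. best_mean K (mus a) t)"
      unfolding f_def exp_reward_def by (simp add: not_integrable_integral_eq)
    have "c \<le> (\<Sum>t=1..T. best_mean K (mus a) t)" using big a(1) by blast
    then show ?thesis using le[OF a(1)] fe by linarith
  next
    case True
    define B where "B = (\<Sum>a\<in>A. \<Sum>t=1..T. best_mean K (mus a) t)"
    have "(\<Sum>a\<in>A. exp_reward M pol (mus a) T) = (\<integral>u. (\<Sum>a\<in>A. det_exp_reward (mus a) (pol u) T) \<partial>M)"
      unfolding exp_reward_def using True by (intro Bochner_Integration.integral_sum[symmetric]) auto
    also have "\<dots> \<le> (\<integral>u. B - real (card A) * c \<partial>M)"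
    proof (rule integral_mono)
      show "integrable M (\<lambda>u. \<Sum>a\<in>A. det_exp_reward (mus a) (pol u) T)" using True by auto
      show "integrable M (\<lambda>u. B - real (card A) * c)" by simp
      fix u
      have "(\<Sum>a\<in>A. (\<Sum>t=1..T. best_mean K (mus a) t) - det_exp_reward (mus a) (pol u) T) \<ge> real (card A) * c"
        by (rule bnd[OF polr])
      then show "(\<Sum>a\<in>A. det_exp_reward (mus a) (pol u) T) \<le> B - real (card A) * c"
        unfolding B_def by (simp add: sum_subtractf)
    qed
    also have "\<dots> = B - real (card A) * c" by (simp add: P.prob_space)
    finally have "(\<Sum>a\<in>A. f (mus a)) \<ge> real (card A) * c"
      unfolding f_def B_def by (simp add: sum_subtractf)
    moreover have "(\<Sum>a\<in>A. f (mus a)) \<le> real (card A) * regret K T V M pol"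
      using le sum_mono[of A "\<lambda>a. f (mus a)" "\<lambda>_. regret K T V M pol"] by simp
    moreover have "card A > 0" using fA neA by (simp add: card_gt_0_iff)
    ultimately show ?thesis by (smt (verit) mult_le_cancel_left_pos of_nat_0_less_iff)
  qed
qed

lemma sum_best_inst:
  assumes "\<forall>t<T. b (t div L) \<in> {1..K}" "0 \<le> e"
  shows "(\<Sum>t=1..T. best_mean K (inst e L b) t) = real T * (1/2 + e)"
proof -
  have "(\<Sum>t=1..T. best_mean K (inst e L b) t) = (\<Sum>t<T. best_mean K (inst e L b) (Suc t))"
    using sum.atLeast1_atMost_eq[of "best_mean K (inst e L b)" T] by simp
  also have "\<dots> = (\<Sum>t<T. 1/2 + e)" using assms best_inst by (intro sum.cong) auto
  finally show ?thesis by simp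
qed

theorem theorem1:
  shows "\<exists>C>0. \<forall>(T::nat) (K::nat) (V::real) (M::real measure) (pol::real \<Rightarrow> bool list \<Rightarrow> nat).
           T \<ge> 1 \<longrightarrow> K \<ge> 2 \<longrightarrow> 1 / real K \<le> V \<longrightarrow> V \<le> real T / real K \<longrightarrow>
           admissible K M pol \<longrightarrow>
           regret K T V M pol \<ge> C * (real K * V) powr (1/3) * real T powr (2/3)"
proof (intro exI[of _ "1/128"] conjI allI impI)
  show "(0::real) < 1/128" by simp
  fix T K :: nat and V :: real and M :: "real measure" and pol :: "real \<Rightarrow> bool list \<Rightarrow> nat"
  assume T: "T \<ge> 1" and K: "K \<ge> 2" and V1: "1 / real K \<le> V" and V2: "V \<le> real T / real K"
    and adm: "admissible K M pol"
  have Kp: "real K > 0" using K by simp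
  have Tp: "real T > 0" using T by simp
  have Vp: "V > 0" using V1 Kp by (smt (verit) divide_pos_pos)
  define x where "x = real K * V / real T"
  have xp: "x > 0" unfolding x_def using Kp Tp Vp by simp
  have x1: "x \<le> 1" unfolding x_def using V2 Kp Tp by (simp add: divide_le_eq mult.commute pos_le_divide_eq)
  define s where "s = x powr (1/3)"
  have sp: "s > 0" unfolding s_def using xp by simp
  have s1: "s \<le> 1" unfolding s_def using xp x1 by (intro powr_le1) auto
  have s3: "s^3 = x" unfolding s_def using xp by (simp add: powr_power)
  have s2: "s^2 \<le> 1" using s1 sp by (simp add: power_le_one)
  have s2p: "s^2 > 0" using sp by simp
  define y where "y = real K / s^2"
  have yK: "y \<ge> real K" unfolding y_def using s2 s2p Kp by (simp add: le_divide_eq)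
  define L where "L = nat \<lceil>y\<rceil>"
  have Lge: "real L \<ge> y" unfolding L_def by linarith
  have Lle: "real L \<le> 2 * y" unfolding L_def using yK K by linarith
  have Lp: "L > 0" using Lge yK K by linarith
  define e where "e = s / 32"
  have ep: "e > 0" unfolding e_def using sp by simp
  have e4: "e \<le> 1/4" unfolding e_def using s1 by simp
  have c: "512*e^2*real L \<le> real K"
  proof -
    have "512*e^2 = s^2/2" unfolding e_def by (simp add: power2_eq_square)
    then have "512*e^2*real L = s^2/2 * real L" by simp
    also have "\<dots> \<le> s^2/2 * (2*y)" using Lle s2p by (intro mult_left_mono) auto
    finally have "512*e^2*real L \<le> s^2/2 * (2*y)" .
    also have "s^2/2 * (2*y) = real K" unfolding y_def using s2p by simp
    finally show ?thesis .
  qed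
  have ev: "e * real T / real L \<le> V"
  proof -
    have "e * real T / real L \<le> e * real T / y"
      using Lge ep Tp yK Kp by (intro divide_left_mono) (auto intro: mult_pos_pos)
    also have "e * real T / y = s^3 * real T / (32 * real K)"
      unfolding y_def e_def using s2p Kp by (simp add: power3_eq_cube power2_eq_square field_simps)
    also have "\<dots> = V / 32" unfolding s3 x_def using Kp Tp by (simp add: field_simps)
    also have "\<dots> \<le> V" using Vp by simp
    finally show ?thesis .
  qed
  define m where "m = T div L + 1"
  define A where "A = PiE {..<m} (\<lambda>_. {1..K})"
  have fA: "finite A" unfolding A_def by (intro finite_PiE) auto
  have cardA: "card A = K ^ m" unfolding A_def by (simp add: card_PiE)
  have neA: "A \<noteq> {}" using cardA K fA by (metis card.empty not_numeral_le_zero power_eq_0_iff)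
  have jm: "t div L < m" if "t < T" for t
  proof -
    have "t div L \<le> T div L" using that by (intro div_le_mono) simp
    then show ?thesis unfolding m_def by simp
  qed
  have blk: "\<forall>t<T. a (t div L) \<in> {1..K}" if "a \<in> A" for a
    using that jm unfolding A_def by (auto simp: PiE_def Pi_def)
  have main: "regret K T V M pol \<ge> e * real T / 4"
  proof (rule rand_bound[OF adm _ fA neA, where mus = "inst e L"])
    show "0 < K" using K by simp
    show "\<forall>a\<in>A. in_variation_set K T V (inst e L a)"
      using ep e4 Lp ev K by (intro ballI inst_var) auto
    show "\<forall>a\<in>A. e * real T / 4 \<le> (\<Sum>t=1..T. best_mean K (inst e L a) t)"
    proof
      fix a assume "a \<in> A"
      then have "(\<Sum>t=1..T. best_mean K (inst e L a) t) = real T * (1/2 + e)"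
        using blk ep by (intro sum_best_inst) auto
      moreover have "e * real T / 4 \<le> real T * (1/2 + e)" using ep Tp by (simp add: algebra_simps)
      ultimately show "e * real T / 4 \<le> (\<Sum>t=1..T. best_mean K (inst e L a) t)" by simp
    qed
    fix p :: "bool list \<Rightarrow> nat" assume p: "\<forall>h. p h \<in> {1..K}"
    have "(\<Sum>a\<in>A. (\<Sum>t=1..T. best_mean K (inst e L a) t) - det_exp_reward (inst e L a) p T)
        = (\<Sum>a\<in>A. e * (\<Sum>t<T. 1 - Qb e L a p t))"
      using blk ep by (intro sum.cong refl det_regret) auto
    also have "\<dots> = e * (\<Sum>t<T. \<Sum>a\<in>A. 1 - Qb e L a p t)"
      by (simp add: sum_distrib_left[symmetric] sum.swap[of _ A])
    also have "\<dots> \<ge> e * (\<Sum>t<T. real (card A) / 4)"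
      unfolding A_def using ep avg_bound[OF ep e4 Lp K p c jm]
      by (intro mult_left_mono sum_mono) auto
    finally show "(\<Sum>a\<in>A. (\<Sum>t=1..T. best_mean K (inst e L a) t) - det_exp_reward (inst e L a) p T) \<ge> real (card A) * (e * real T / 4)"
      by (simp add: algebra_simps)
  qed
  have "(real K * V) powr (1/3) * real T powr (2/3) = s * real T"
  proof -
    have "s = (real K * V) powr (1/3) / real T powr (1/3)" unfolding s_def x_def by (rule powr_divide)
    moreover have "real T powr (1/3) * real T powr (2/3) = real T"
      using Tp by (simp add: powr_add[symmetric])
    moreover have "real T powr (1/3) > 0" using Tp by simp
    ultimately have h: "(real K * V) powr (1/3) = s * real T powr (1/3)" by (simp add: field_simps)
    have "(real K * V) powr (1/3) * real T powr (2/3) = s * (real T powr (1/3) * real T powr (2/3))"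
      unfolding h by (simp only: mult.assoc)
    then show ?thesis using \<open>real T powr (1/3) * real T powr (2/3) = real T\<close> by simp
  qed
  then have "1/128 * (real K * V) powr (1/3) * real T powr (2/3) = e * real T / 4"
    unfolding e_def by simp
  then show "regret K T V M pol \<ge> 1/128 * (real K * V) powr (1/3) * real T powr (2/3)"
    using main by linarith
qed

end
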